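(* Affine rigidity in $\mathbb{R}^d$ is a generic property of hypergraphs: for every hypergraph $\Theta$, either every generic framework $(p,\Theta)$ with $p:V(\Theta)\to\mathbb{R}^d$ is affinely rigid in $\mathbb{R}^d$, or no generic such framework is affinely rigid in $\mathbb{R}^d$.
   Context: A hypergraph $\Theta$ has a finite vertex set $V$ and hyperedges that are subsets of $V$; a framework $(p,\Theta)$ pairs it with a configuration $p:V\to\mathbb{R}^d$. A configuration is generic if its coordinates satisfy no nonzero polynomial equation with rational coefficients. Frameworks $(p,\Theta),(q,\Theta)$ in $\mathbb{R}^d$ are affinely equivalent if for each hyperedge $h$ there is an invertible affine map $g_h$ of $\mathbb{R}^d$ with $g_h(p(u))=q(u)$ for $u\in h$, and affinely congruent if a single invertible affine map $g$ satisfies $g(p(u))=q(u)$ for all $u\in V$. $(p,\Theta)$ is affinely rigid in $\mathbb{R}^d$ if every framework in $\mathbb{R}^d$ affinely equivalent to it is affinely congruent to it. *)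

theory Defs
  imports "HOL-Analysis.Analysis" "HOL-Library.Poly_Mapping"
begin

text \<open>Multivariate polynomials with rational coefficients in variables indexed by 'i:
  finitely supported maps from monomials (finitely supported exponent vectors) to rationals.\<close>
type_synonym 'i rat_mpoly = "('i \<Rightarrow>\<^sub>0 nat) \<Rightarrow>\<^sub>0 rat"

definition mpoly_eval :: "'i rat_mpoly \<Rightarrow> ('i \<Rightarrow> real) \<Rightarrow> real" where
  "mpoly_eval P x = (\<Sum>mon\<in>Poly_Mapping.keys P. of_rat (Poly_Mapping.lookup P mon) * (\<Prod>v\<in>Poly_Mapping.keys mon. x v ^ Poly_Mapping.lookup mon v))"

definition generic_config :: "'v set \<Rightarrow> ('v \<Rightarrow> real ^ 'd) \<Rightarrow> bool" where
  "generic_config V p \<longleftrightarrow>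
     (\<forall>P :: ('v \<times> 'd) rat_mpoly.
        P \<noteq> 0 \<and> (\<forall>m\<in>Poly_Mapping.keys P. Poly_Mapping.keys m \<subseteq> V \<times> UNIV) \<longrightarrow>
        mpoly_eval P (\<lambda>(u, k). p u $ k) \<noteq> 0)"

definition invertible_affine :: "(real ^ 'd \<Rightarrow> real ^ 'd) \<Rightarrow> bool" where
  "invertible_affine g \<longleftrightarrow>
     (\<exists>(A :: real ^ 'd ^ 'd) b. invertible A \<and> g = (\<lambda>x. A *v x + b))"

definition affinely_equivalent ::
  "'v set set \<Rightarrow> ('v \<Rightarrow> real ^ 'd) \<Rightarrow> ('v \<Rightarrow> real ^ 'd) \<Rightarrow> bool" where
  "affinely_equivalent E p q \<longleftrightarrow>
     (\<forall>h\<in>E. \<exists>g. invertible_affine g \<and> (\<forall>u\<in>h. g (p u) = q u))"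

definition affinely_congruent ::
  "'v set \<Rightarrow> ('v \<Rightarrow> real ^ 'd) \<Rightarrow> ('v \<Rightarrow> real ^ 'd) \<Rightarrow> bool" where
  "affinely_congruent V p q \<longleftrightarrow>
     (\<exists>g. invertible_affine g \<and> (\<forall>u\<in>V. g (p u) = q u))"

definition affinely_rigid :: "'v set \<Rightarrow> 'v set set \<Rightarrow> ('v \<Rightarrow> real ^ 'd) \<Rightarrow> bool" where
  "affinely_rigid V E p \<longleftrightarrow>
     (\<forall>q :: 'v \<Rightarrow> real ^ 'd. affinely_equivalent E p q \<longrightarrow> affinely_congruent V p q)"

end

theory Submission
  imports Defs "Jordan_Normal_Form.Determinant"
begin


definition mon :: "('i \<Rightarrow> real) \<Rightarrow> ('i \<Rightarrow>\<^sub>0 nat) \<Rightarrow> real" where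
  "mon x m = (\<Prod>v\<in>Poly_Mapping.keys m. x v ^ Poly_Mapping.lookup m v)"

lemma mon_superset:
  assumes "finite K" "Poly_Mapping.keys m \<subseteq> K"
  shows "mon x m = (\<Prod>v\<in>K. x v ^ Poly_Mapping.lookup m v)"
  unfolding mon_def
  by (rule prod.mono_neutral_left) (use assms in \<open>auto simp: in_keys_iff\<close>)

lemma mon_add: "mon x (a + b) = mon x a * mon x b"
proof -
  let ?K = "Poly_Mapping.keys a \<union> Poly_Mapping.keys b"
  have f: "finite ?K" by simp
  have "mon x (a + b) = (\<Prod>v\<in>?K. x v ^ Poly_Mapping.lookup (a+b) v)"
    by (rule mon_superset[OF f]) (rule keys_add)
  also have "\<dots> = (\<Prod>v\<in>?K. x v ^ Poly_Mapping.lookup a v * x v ^ Poly_Mapping.lookup b v)"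
    by (simp add: lookup_add power_add)
  also have "\<dots> = mon x a * mon x b"
    by (simp add: prod.distrib mon_superset[OF f])
  finally show ?thesis .
qed

lemma mon_zero[simp]: "mon x 0 = 1"
  by (simp add: mon_def)

lemma eval_superset:
  assumes "finite K" "Poly_Mapping.keys P \<subseteq> K"
  shows "mpoly_eval P x = (\<Sum>m\<in>K. of_rat (Poly_Mapping.lookup P m) * mon x m)"
  unfolding mpoly_eval_def mon_def[symmetric]
  by (rule sum.mono_neutral_left) (use assms in \<open>auto simp: in_keys_iff\<close>)

lemma eval_add: "mpoly_eval (P + Q) x = mpoly_eval P x + mpoly_eval Q x"
proof -
  let ?K = "Poly_Mapping.keys P \<union> Poly_Mapping.keys Q"
  have f: "finite ?K" by simp
  show ?thesis
    by (simp add: eval_superset[OF f keys_add] eval_superset[OF f] lookup_add of_rat_add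
        distrib_right sum.distrib)
qed

lemma eval_zero[simp]: "mpoly_eval 0 x = 0"
  by (simp add: mpoly_eval_def)

lemma eval_sum: "finite I \<Longrightarrow> mpoly_eval (\<Sum>i\<in>I. P i) x = (\<Sum>i\<in>I. mpoly_eval (P i) x)"
  by (induct I rule: finite_induct) (auto simp: eval_add)

lemma eval_single: "mpoly_eval (Poly_Mapping.single m c) x = of_rat c * mon x m"
  by (simp add: mpoly_eval_def mon_def)

lemma eval_mult:
  "mpoly_eval (\<Sum>a\<in>Poly_Mapping.keys P. \<Sum>b\<in>Poly_Mapping.keys Q.
      Poly_Mapping.single (a + b) (Poly_Mapping.lookup P a * Poly_Mapping.lookup Q b)) x
   = mpoly_eval P x * mpoly_eval Q x"
proof -
  have k: "\<And>R. mpoly_eval R x = (\<Sum>m\<in>Poly_Mapping.keys R. of_rat (Poly_Mapping.lookup R m) * mon x m)"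
    by (rule eval_superset) auto
  show ?thesis
    by (simp add: eval_sum eval_single mon_add of_rat_mult k[of P] k[of Q]
      sum_distrib_left sum_distrib_right mult_ac)
     (subst sum.swap, simp add: mult_ac)
qed

definition polyfun :: "'v set \<Rightarrow> (('v \<Rightarrow> real^'d) \<Rightarrow> real) \<Rightarrow> bool" where
  "polyfun V f \<longleftrightarrow> (\<exists>P :: ('v \<times> 'd) rat_mpoly.
      (\<forall>m\<in>Poly_Mapping.keys P. Poly_Mapping.keys m \<subseteq> V \<times> UNIV) \<and>
      (\<forall>p. f p = mpoly_eval P (\<lambda>(u, k). p u $ k)))"

lemma polyfun_const: "polyfun V (\<lambda>p. of_rat c)"
  unfolding polyfun_def
  by (rule exI[of _ "Poly_Mapping.single 0 c"]) (auto simp: eval_single)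

lemma polyfun_coord: "u \<in> V \<Longrightarrow> polyfun V (\<lambda>p. p u $ k)"
  unfolding polyfun_def
  apply (rule exI[of _ "Poly_Mapping.single (Poly_Mapping.single (u, k) 1) 1"])
  apply (auto simp: eval_single mon_def)
  done

lemma polyfun_add: "polyfun V f \<Longrightarrow> polyfun V g \<Longrightarrow> polyfun V (\<lambda>p. f p + g p)"
  unfolding polyfun_def
  apply (elim exE conjE)
  subgoal for P Q
    apply (rule exI[of _ "P + Q"])
    using keys_add[of P Q] by (auto simp: eval_add) (use keys_add[of P Q] in blast)+
  done

lemma polyfun_mult: "polyfun V f \<Longrightarrow> polyfun V g \<Longrightarrow> polyfun V (\<lambda>p. f p * g p)"
  unfolding polyfun_def
proof (elim exE conjE)
  fix P Q :: "('a \<times> 'b) rat_mpoly"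
  assume kP: "\<forall>m\<in>Poly_Mapping.keys P. Poly_Mapping.keys m \<subseteq> V \<times> UNIV"
    and eP: "\<forall>p. f p = mpoly_eval P (\<lambda>(u, k). p u $ k)"
    and kQ: "\<forall>m\<in>Poly_Mapping.keys Q. Poly_Mapping.keys m \<subseteq> V \<times> UNIV"
    and eQ: "\<forall>p. g p = mpoly_eval Q (\<lambda>(u, k). p u $ k)"
  define S where "S a = (\<Sum>b\<in>Poly_Mapping.keys Q.
      Poly_Mapping.single (a + b) (Poly_Mapping.lookup P a * Poly_Mapping.lookup Q b) :: ('a \<times> 'b) rat_mpoly)" for a
  define T where "T a b = (Poly_Mapping.single (a + b) (Poly_Mapping.lookup P a * Poly_Mapping.lookup Q b) :: ('a \<times> 'b) rat_mpoly)" for a b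
  define R where "R = (\<Sum>a\<in>Poly_Mapping.keys P. S a)"
  have "\<forall>m\<in>Poly_Mapping.keys R. Poly_Mapping.keys m \<subseteq> V \<times> UNIV"
  proof
    fix m assume m: "m \<in> Poly_Mapping.keys R"
    have "m \<in> (\<Union>a\<in>Poly_Mapping.keys P. Poly_Mapping.keys (S a))"
      using keys_sum[of S "Poly_Mapping.keys P"] m unfolding R_def by (rule subsetD)
    then obtain a where a: "a \<in> Poly_Mapping.keys P" "m \<in> Poly_Mapping.keys (S a)" by (rule UN_E)
    have "m \<in> (\<Union>b\<in>Poly_Mapping.keys Q. Poly_Mapping.keys (T a b))"
      using keys_sum[of "T a" "Poly_Mapping.keys Q"] a(2) unfolding S_def T_def by (rule subsetD)
    then obtain b where b: "b \<in> Poly_Mapping.keys Q" "m \<in> Poly_Mapping.keys (T a b)" by (rule UN_E)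
    note ab = a(1) b(1) b(2)[unfolded T_def]
    then have "m = a + b" by (auto split: if_splits)
    then show "Poly_Mapping.keys m \<subseteq> V \<times> UNIV"
      using keys_add[of a b] kP kQ ab by blast
  qed
  moreover have "\<forall>p. f p * g p = mpoly_eval R (\<lambda>(u, k). p u $ k)"
    using eP eQ by (simp add: R_def S_def eval_mult)
  ultimately show "\<exists>R :: ('a \<times> 'b) rat_mpoly. (\<forall>m\<in>Poly_Mapping.keys R. Poly_Mapping.keys m \<subseteq> V \<times> UNIV) \<and>
      (\<forall>p. f p * g p = mpoly_eval R (\<lambda>(u, k). p u $ k))" by blast
qed

lemma polyfun_sum: "finite I \<Longrightarrow> (\<And>i. i \<in> I \<Longrightarrow> polyfun V (f i)) \<Longrightarrow> polyfun V (\<lambda>p. \<Sum>i\<in>I. f i p)"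
  by (induct I rule: finite_induct) (auto intro: polyfun_add polyfun_const[where c=0, simplified])

lemma polyfun_prod: "finite I \<Longrightarrow> (\<And>i. i \<in> I \<Longrightarrow> polyfun V (f i)) \<Longrightarrow> polyfun V (\<lambda>p. \<Prod>i\<in>I. f i p)"
  by (induct I rule: finite_induct) (auto intro: polyfun_mult polyfun_const[where c=1, simplified])

lemma polyfun_int: "polyfun V (\<lambda>p. of_int c)"
  using polyfun_const[of V "of_int c"] by simp

lemma polyfun_neg: "polyfun V f \<Longrightarrow> polyfun V (\<lambda>p. - f p)"
  using polyfun_mult[OF polyfun_int[of V "-1"]] by simp

lemma polyfun_generic:
  assumes "polyfun V f" "f p0 \<noteq> 0" "generic_config V p"
  shows "f p \<noteq> 0"
proof -
  obtain P :: "('a \<times> 'b) rat_mpoly" where k: "\<forall>m\<in>Poly_Mapping.keys P. Poly_Mapping.keys m \<subseteq> V \<times> UNIV"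
    and e: "\<forall>p. f p = mpoly_eval P (\<lambda>(u, k). p u $ k)"
    using assms(1) unfolding polyfun_def by blast
  have "P \<noteq> 0" using assms(2) e by auto
  then show ?thesis using assms(3) k e unfolding generic_config_def by auto
qed


definition ktriv :: "'x set \<Rightarrow> 'y set \<Rightarrow> ('y \<Rightarrow> 'x \<Rightarrow> real) \<Rightarrow> bool" where
  "ktriv X Y c \<longleftrightarrow> (\<forall>z. (\<forall>y\<in>Y. (\<Sum>x\<in>X. c y x * z x) = 0) \<longrightarrow> (\<forall>x\<in>X. z x = 0))"

lemma gram_det_iff:
  fixes c :: "'y \<Rightarrow> 'x \<Rightarrow> real" and e :: "nat \<Rightarrow> 'x"
  assumes fY: "finite Y" and e: "bij_betw e {0..<N} X"
  defines "G \<equiv> mat N N (\<lambda>(i, j). \<Sum>y\<in>Y. c y (e i) * c y (e j))"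
  shows "Determinant.det G \<noteq> 0 \<longleftrightarrow> ktriv X Y c"
proof -
  have G: "G \<in> carrier_mat N N" unfolding G_def by simp
  have sumX: "\<And>f. (\<Sum>x\<in>X. f x) = (\<Sum>i<N. f (e i))"
    using sum.reindex_bij_betw[OF e] by (metis atLeast0LessThan)
  show ?thesis
  proof
    assume d: "Determinant.det G \<noteq> 0"
    show "ktriv X Y c"
      unfolding ktriv_def
    proof (intro allI impI ballI)
      fix z x assume hz: "\<forall>y\<in>Y. (\<Sum>x\<in>X. c y x * z x) = 0" and x: "x \<in> X"
      define v where "v = vec N (\<lambda>i. z (e i))"
      have "G *\<^sub>v v = 0\<^sub>v N"
      proof (rule eq_vecI)
        fix i assume "i < dim_vec (0\<^sub>v N :: real vec)"
        then have i: "i < N" by simp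
        have "(G *\<^sub>v v) $ i = (\<Sum>j<N. (\<Sum>y\<in>Y. c y (e i) * c y (e j)) * z (e j))"
          using i by (simp add: G_def v_def scalar_prod_def atLeast0LessThan)
        also have "\<dots> = (\<Sum>y\<in>Y. c y (e i) * (\<Sum>j<N. c y (e j) * z (e j)))"
          by (simp add: sum_distrib_left sum_distrib_right mult_ac) (rule sum.swap)
        also have "\<dots> = 0" using hz by (simp add: sumX)
        finally show "(G *\<^sub>v v) $ i = 0\<^sub>v N $ i" using i by simp
      qed (simp add: G_def)
      moreover have "v \<in> carrier_vec N" by (simp add: v_def)
      ultimately have "v = 0\<^sub>v N"
        using det_0_iff_vec_prod_zero[OF G] d by blast
      moreover obtain i where "i < N" "e i = x"
        using e x unfolding bij_betw_def by (metis atLeastLessThan_iff imageE)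
      ultimately show "z x = 0"
        by (metis index_vec index_zero_vec(1) v_def)
    qed
  next
    assume k: "ktriv X Y c"
    show "Determinant.det G \<noteq> 0"
    proof
      assume "Determinant.det G = 0"
      then obtain v where v: "v \<in> carrier_vec N" "v \<noteq> 0\<^sub>v N" "G *\<^sub>v v = 0\<^sub>v N"
        using det_0_iff_vec_prod_zero[OF G] by blast
      define z where "z = (\<lambda>x. v $ (the_inv_into {0..<N} e x))"
      have ze: "\<And>i. i < N \<Longrightarrow> z (e i) = v $ i"
        unfolding z_def using e by (simp add: bij_betw_def the_inv_into_f_f)
      have "0 = (\<Sum>i<N. v $ i * (G *\<^sub>v v) $ i)" using v by simp
      also have "\<dots> = (\<Sum>i<N. v $ i * (\<Sum>j<N. (\<Sum>y\<in>Y. c y (e i) * c y (e j)) * v $ j))"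
        using v(1) by (simp add: G_def scalar_prod_def atLeast0LessThan)
      also have "\<dots> = (\<Sum>y\<in>Y. (\<Sum>i<N. c y (e i) * v $ i)\<^sup>2)"
        by (simp add: power2_eq_square sum_distrib_left sum_distrib_right mult_ac sum.swap[of _ Y])
      finally have "(\<Sum>y\<in>Y. (\<Sum>i<N. c y (e i) * v $ i)\<^sup>2) = 0" by simp
      then have "\<forall>y\<in>Y. (\<Sum>i<N. c y (e i) * v $ i)\<^sup>2 = 0"
        using fY by (subst (asm) sum_nonneg_eq_0_iff) auto
      then have "\<forall>y\<in>Y. (\<Sum>x\<in>X. c y x * z x) = 0"
        by (simp add: sumX ze)
      then have "\<forall>x\<in>X. z x = 0" using k unfolding ktriv_def by blast
      then have "\<forall>i<N. v $ i = 0"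
        using ze e unfolding bij_betw_def by (metis atLeast0LessThan imageI lessThan_iff)
      then have "v = 0\<^sub>v N" using v(1) by (intro eq_vecI) auto
      with v(2) show False by simp
    qed
  qed
qed

lemma ktriv_transfer:
  fixes C :: "('v \<Rightarrow> real^'d) \<Rightarrow> 'y \<Rightarrow> 'x \<Rightarrow> real"
  assumes fX: "finite X" and fY: "finite Y"
    and pf: "\<And>y x. y \<in> Y \<Longrightarrow> x \<in> X \<Longrightarrow> polyfun V (\<lambda>p. C p y x)"
    and k0: "ktriv X Y (C p0)" and gen: "generic_config V p"
  shows "ktriv X Y (C p)"
proof -
  obtain e where e: "bij_betw e {0..<card X} X"
    using ex_bij_betw_nat_finite[OF fX] by blast
  let ?N = "card X"
  define G where "G q = mat ?N ?N (\<lambda>(i, j). \<Sum>y\<in>Y. C q y (e i) * C q y (e j))" for q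
  have eX: "\<And>i. i < ?N \<Longrightarrow> e i \<in> X" using e unfolding bij_betw_def by auto
  have detG: "Determinant.det (G q) = (\<Sum>\<pi> \<in> {\<pi>. \<pi> permutes {0..<?N}}.
      signof \<pi> * (\<Prod>i = 0..<?N. (\<Sum>y\<in>Y. C q y (e i) * C q y (e (\<pi> i)))))" for q
    unfolding Determinant.det_def G_def
    by simp
  have "polyfun V (\<lambda>q. Determinant.det (G q))"
    unfolding detG
  proof (rule polyfun_sum)
    show "finite {\<pi>. \<pi> permutes {0..<?N}}" by (simp add: finite_permutations)
    fix \<pi> assume \<pi>: "\<pi> \<in> {\<pi>. \<pi> permutes {0..<?N}}"
    show "polyfun V (\<lambda>q. signof \<pi> * (\<Prod>i = 0..<?N. (\<Sum>y\<in>Y. C q y (e i) * C q y (e (\<pi> i)))))"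
    proof (rule polyfun_mult)
      show "polyfun V (\<lambda>q. signof \<pi>)" by (rule polyfun_int)
      show "polyfun V (\<lambda>q. \<Prod>i = 0..<?N. \<Sum>y\<in>Y. C q y (e i) * C q y (e (\<pi> i)))"
      proof (rule polyfun_prod, simp, rule polyfun_sum[OF fY], rule polyfun_mult)
        fix i y assume i: "i \<in> {0..<?N}" and y: "y \<in> Y"
        have "\<pi> i \<in> {0..<?N}" using \<pi> i by (simp add: permutes_in_image)
        then show "polyfun V (\<lambda>q. C q y (e i))" "polyfun V (\<lambda>q. C q y (e (\<pi> i)))"
          using pf y eX i by auto
      qed
    qed
  qed
  moreover have "Determinant.det (G p0) \<noteq> 0"
    using gram_det_iff[OF fY e, of "C p0"] k0 unfolding G_def by simp
  ultimately have "Determinant.det (G p) \<noteq> 0"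
    using polyfun_generic gen by blast
  then show ?thesis
    using gram_det_iff[OF fY e, of "C p"] unfolding G_def by simp
qed


definition cK :: "('v \<Rightarrow> real^'d) \<Rightarrow> 'd option \<Rightarrow> 'v \<Rightarrow> real" where
  "cK p y u = (case y of None \<Rightarrow> 1 | Some k \<Rightarrow> p u $ k)"

definition KT :: "('v \<Rightarrow> real^'d) \<Rightarrow> 'v set \<Rightarrow> bool" where
  "KT p U = ktriv U UNIV (cK p)"

lemma KT_iff:
  "KT p U \<longleftrightarrow> (\<forall>c. (\<Sum>u\<in>U. c u *\<^sub>R p u) = 0 \<and> (\<Sum>u\<in>U. c u) = 0 \<longrightarrow> (\<forall>u\<in>U. c u = 0))"
proof -
  have "(\<forall>y. (\<Sum>u\<in>U. cK p y u * c u) = 0) \<longleftrightarrow> (\<Sum>u\<in>U. c u *\<^sub>R p u) = 0 \<and> (\<Sum>u\<in>U. c u) = 0" for c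
  proof -
    have "(\<forall>y. (\<Sum>u\<in>U. cK p y u * c u) = 0) \<longleftrightarrow>
        (\<Sum>u\<in>U. c u) = 0 \<and> (\<forall>k. (\<Sum>u\<in>U. p u $ k * c u) = 0)"
      unfolding cK_def by (metis (no_types, lifting) mult_1 option.exhaust option.simps(4,5) sum.cong)
    also have "(\<forall>k. (\<Sum>u\<in>U. p u $ k * c u) = 0) \<longleftrightarrow> (\<Sum>u\<in>U. c u *\<^sub>R p u) = 0"
      by (simp add: Finite_Cartesian_Product.vec_eq_iff sum_component mult.commute)
    finally show ?thesis by blast
  qed
  then show ?thesis unfolding KT_def ktriv_def by (auto simp: mult.commute)
qed

lemma KT_subset: "KT p U \<Longrightarrow> W \<subseteq> U \<Longrightarrow> finite U \<Longrightarrow> KT p W"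
  unfolding KT_iff
proof (intro allI impI ballI)
  fix c u
  assume H: "\<forall>c. (\<Sum>u\<in>U. c u *\<^sub>R p u) = 0 \<and> sum c U = 0 \<longrightarrow> (\<forall>u\<in>U. c u = 0)"
    and W: "W \<subseteq> U" "finite U" and c: "(\<Sum>u\<in>W. c u *\<^sub>R p u) = 0 \<and> sum c W = 0" and u: "u \<in> W"
  define c' where "c' w = (if w \<in> W then c w else 0)" for w
  have "(\<Sum>u\<in>U. c' u *\<^sub>R p u) = (\<Sum>u\<in>W. c u *\<^sub>R p u)"
    unfolding c'_def by (rule sum.mono_neutral_cong_right) (use W in auto)
  moreover have "sum c' U = sum c W"
    unfolding c'_def by (rule sum.mono_neutral_cong_right) (use W in auto)
  ultimately have "\<forall>u\<in>U. c' u = 0" using H c by auto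
  then have "c' u = 0" using u W by blast
  then show "c u = 0" using u by (simp add: c'_def)
qed

lemma KT_cong: "(\<And>u. u \<in> U \<Longrightarrow> p u = q u) \<Longrightarrow> KT p U = KT q U"
  unfolding KT_iff by (simp cong: sum.cong)

lemma KT_inj:
  assumes "KT p U" "finite U"
  shows "inj_on p U"
proof (rule inj_onI, rule ccontr)
  fix u v assume uv: "u \<in> U" "v \<in> U" "p u = p v" "u \<noteq> v"
  define c where "c w = (if w = u then 1 else 0) - (if w = v then 1 else (0::real))" for w
  have "(\<Sum>w\<in>U. c w *\<^sub>R p w) = 0"
    using uv assms(2) by (simp add: c_def scaleR_left_diff_distrib sum_subtractf if_distrib[of "\<lambda>t. t *\<^sub>R _"] cong: if_cong)
  moreover have "(\<Sum>w\<in>U. c w) = 0"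
    using uv assms(2) by (simp add: c_def sum_subtractf)
  ultimately have "c u = 0" using assms(1) uv unfolding KT_iff by blast
  then show False using uv by (simp add: c_def)
qed

lemma KT_indep:
  assumes "KT p U" "finite U" "u0 \<in> U"
  shows "inj_on (\<lambda>u. p u - p u0) (U - {u0})"
    "independent ((\<lambda>u. p u - p u0) ` (U - {u0}))"
proof -
  let ?D = "\<lambda>u. p u - p u0"
  let ?W = "U - {u0}"
  show inj: "inj_on ?D ?W"
    using KT_inj[OF assms(1,2)] by (auto simp: inj_on_def)
  show "independent (?D ` ?W)"
    unfolding eucl.independent_explicit
  proof (intro conjI allI impI ballI)
    show "finite (?D ` ?W)" using assms by simp
    fix a w
    assume a: "(\<Sum>v\<in>?D ` ?W. a v *\<^sub>R v) = 0" and w: "w \<in> ?D ` ?W"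
    have a': "(\<Sum>u\<in>?W. a (?D u) *\<^sub>R ?D u) = 0"
      using a by (simp add: sum.reindex[OF inj])
    define c where "c u = (if u = u0 then - (\<Sum>v\<in>?W. a (?D v)) else a (?D u))" for u
    have U: "U = insert u0 ?W" using assms(3) by auto
    have fW: "finite ?W" using assms(2) by simp
    have s1: "(\<Sum>u\<in>U. c u *\<^sub>R p u) = 0"
    proof -
      have "(\<Sum>u\<in>U. c u *\<^sub>R p u) = c u0 *\<^sub>R p u0 + (\<Sum>u\<in>?W. c u *\<^sub>R p u)"
        by (subst U, subst sum.insert[OF fW]) auto
      also have "\<dots> = - (\<Sum>v\<in>?W. a (?D v)) *\<^sub>R p u0 + (\<Sum>u\<in>?W. a (?D u) *\<^sub>R p u)"
        by (simp add: c_def)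
      also have "\<dots> = (\<Sum>u\<in>?W. a (?D u) *\<^sub>R ?D u)"
        by (simp add: scaleR_diff_right sum_subtractf scaleR_sum_left)
      finally show ?thesis using a' by simp
    qed
    have s2: "(\<Sum>u\<in>U. c u) = 0"
      by (subst U, subst sum.insert[OF fW]) (auto simp: c_def)
    have cz: "\<forall>u\<in>U. c u = 0" using assms(1) s1 s2 unfolding KT_iff by blast
    obtain u where u: "u \<in> ?W" "w = ?D u" using w by blast
    have "c u = 0" using cz u by blast
    then show "a w = 0" using u by (simp add: c_def)
  qed
qed

lemma invertible_mat1: "invertible (Finite_Cartesian_Product.mat 1 :: real^'n^'n)"
  unfolding invertible_def by (rule exI[of _ "Finite_Cartesian_Product.mat 1"]) simp

lemma invertible_affine_id: "invertible_affine (\<lambda>x::real^'n. x)"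
  unfolding invertible_affine_def
  by (rule exI[of _ "Finite_Cartesian_Product.mat 1"], rule exI[of _ 0]) (simp add: invertible_mat1)

lemma inj_imp_invertible: "inj ((*v) (A :: real^'n^'n)) \<Longrightarrow> invertible A"
  unfolding invertible_def
  using matrix_left_invertible_injective matrix_left_right_inverse by metis

lemma KT_A2:
  assumes "KT p U" "KT p' U" "finite U"
  shows "\<exists>\<phi>. invertible_affine \<phi> \<and> (\<forall>u\<in>U. \<phi> (p u) = p' u)"
proof (cases "U = {}")
  case True
  then show ?thesis
    using invertible_affine_id by blast
next
  case False
  then obtain u0 where u0: "u0 \<in> U" by blast
  let ?W = "U - {u0}"
  let ?D = "\<lambda>u. p u - p u0"
  let ?D' = "\<lambda>u. p' u - p' u0"
  note i1 = KT_indep[OF assms(1,3) u0] and i2 = KT_indep[OF assms(2,3) u0]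
  define f where "f w = ?D' (inv_into ?W ?D w)" for w
  have fD: "\<And>u. u \<in> ?W \<Longrightarrow> f (?D u) = ?D' u"
    unfolding f_def using inv_into_f_f[OF i1(1)] by simp
  have fimg: "f ` (?D ` ?W) = ?D' ` ?W"
    using fD by (auto simp: image_iff)
  have finj: "inj_on f (?D ` ?W)"
  proof (rule inj_onI)
    fix x y assume x: "x \<in> ?D ` ?W" and y: "y \<in> ?D ` ?W" and fxy: "f x = f y"
    obtain u where u: "u \<in> ?W" "x = ?D u" using x by blast
    obtain v where v: "v \<in> ?W" "y = ?D v" using y by blast
    have "?D' u = ?D' v" using fxy fD u v by simp
    then have "u = v" using i2(1) u(1) v(1) unfolding inj_on_def by blast
    then show "x = y" using u v by simp
  qed
  obtain g where g: "linear g" "inj g" "\<forall>x\<in>?D ` ?W. g x = f x"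
    using eucl.linear_independent_extend_inj[OF i1(2) _ finj] i2(2) fimg by metis
  define A where "A = matrix g"
  have gA: "\<And>x. g x = A *v x"
    unfolding A_def using g(1) by (simp add: matrix_works linear_matrix_vector_mul_eq)
  have "inj ((*v) A)" using g(2) gA by (metis (no_types, lifting) injD injI)
  then have invA: "invertible A" by (rule inj_imp_invertible)
  show ?thesis
  proof (intro exI conjI ballI)
    show "invertible_affine (\<lambda>x. A *v x + (p' u0 - A *v p u0))"
      unfolding invertible_affine_def using invA by blast
    fix u assume u: "u \<in> U"
    show "A *v p u + (p' u0 - A *v p u0) = p' u"
    proof (cases "u = u0")
      case True then show ?thesis by simp
    next
      case False
      then have "u \<in> ?W" using u by simp
      then have "A *v ?D u = ?D' u" using g(3) fD gA by force
      then show ?thesis by (simp add: matrix_vector_mult_diff_distrib algebra_simps)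
    qed
  qed
qed


lemma KT_EXT:
  fixes p r :: "'v \<Rightarrow> real^'d"
  assumes "KT p U" "finite U"
  shows "\<exists>A b. \<forall>u\<in>U. A *v p u + b = r u"
proof (cases "U = {}")
  case True then show ?thesis by auto
next
  case False
  then obtain u0 where u0: "u0 \<in> U" by blast
  let ?W = "U - {u0}"
  let ?D = "\<lambda>u. p u - p u0"
  note i1 = KT_indep[OF assms u0]
  define f where "f w = r (inv_into ?W ?D w) - r u0" for w
  have fD: "\<And>u. u \<in> ?W \<Longrightarrow> f (?D u) = r u - r u0"
    unfolding f_def using inv_into_f_f[OF i1(1)] by simp
  obtain g where g: "linear g" "\<forall>x\<in>?D ` ?W. g x = f x"
    using real_vector.linear_independent_extend[OF i1(2)] by blast
  define A where "A = matrix g"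
  have gA: "\<And>x. g x = A *v x"
    unfolding A_def using g(1) by (simp add: matrix_works linear_matrix_vector_mul_eq)
  show ?thesis
  proof (intro exI ballI)
    fix u assume u: "u \<in> U"
    show "A *v p u + (r u0 - A *v p u0) = r u"
    proof (cases "u = u0")
      case True then show ?thesis by simp
    next
      case False
      then have "u \<in> ?W" using u by simp
      then have "A *v ?D u = r u - r u0" using g(2) fD gA by force
      then show ?thesis by (simp add: matrix_vector_mult_diff_distrib algebra_simps)
    qed
  qed
qed

lemma KT_UNIQ:
  fixes p :: "'v \<Rightarrow> real^'d"
  assumes "KT p U" "finite U" "card U = CARD('d) + 1" "\<forall>u\<in>U. A *v p u + b = 0"
  shows "A = 0 \<and> b = 0"
proof -
  have "U \<noteq> {}" using assms(3) by auto
  then obtain u0 where u0: "u0 \<in> U" by blast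
  let ?W = "U - {u0}"
  let ?D = "\<lambda>u. p u - p u0"
  note i1 = KT_indep[OF assms(1,2) u0]
  have cW: "card ?W = CARD('d)" using assms(2,3) u0 by simp
  have cB: "card (?D ` ?W) = dim (UNIV :: (real^'d) set)"
    using card_image[OF i1(1)] cW by (simp add: eucl.dim_UNIV)
  have span: "UNIV \<subseteq> span (?D ` ?W)"
    using eucl.card_eq_dim[of "?D ` ?W" UNIV] cB i1(2) assms(2) by auto
  have z: "\<And>x. x \<in> ?D ` ?W \<Longrightarrow> A *v x = 0"
  proof -
    fix x assume "x \<in> ?D ` ?W"
    then obtain u where u: "u \<in> ?W" "x = ?D u" by blast
    have "A *v p u + b = 0" "A *v p u0 + b = 0" using assms(4) u u0 by auto
    moreover have "A *v x = (A *v p u + b) - (A *v p u0 + b)"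
      unfolding u(2) by (simp add: matrix_vector_mult_diff_distrib)
    ultimately show "A *v x = 0" by simp
  qed
  have "\<And>x. A *v x = 0"
    using real_vector.linear_eq_0_on_span[OF matrix_vector_mul_linear z] span by blast
  then have A: "A = 0" by (simp add: matrix_eq)
  then show ?thesis using assms(4) u0 by auto
qed

lemma generic_KT:
  fixes p :: "'v \<Rightarrow> real^'d"
  assumes gen: "generic_config V p" and UV: "U \<subseteq> V" and fV: "finite V"
    and cU: "card U \<le> CARD('d) + 1"
  shows "KT p U"
proof (cases "U = {}")
  case True then show ?thesis by (simp add: KT_iff)
next
  case False
  then obtain u0 where u0: "u0 \<in> U" by blast
  let ?W = "U - {u0}"
  have fU: "finite U" using UV fV finite_subset by blast
  have "card ?W \<le> CARD('d)" using cU u0 fU by simp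
  then obtain \<iota> :: "'v \<Rightarrow> 'd" where \<iota>: "inj_on \<iota> ?W"
    using card_le_inj[of ?W "UNIV::'d set"] fU by auto
  define p0 where "p0 u = (if u = u0 then 0 else axis (\<iota> u) 1 :: real^'d)" for u
  have k0: "KT p0 U"
    unfolding KT_iff
  proof (intro allI impI ballI)
    fix c u assume c: "(\<Sum>u\<in>U. c u *\<^sub>R p0 u) = 0 \<and> sum c U = 0" and u: "u \<in> U"
    have cW: "c w = 0" if w: "w \<in> ?W" for w
    proof -
      have "0 = (\<Sum>u\<in>U. c u *\<^sub>R p0 u) $ \<iota> w" using c by simp
      also have "\<dots> = (\<Sum>u\<in>U. c u * p0 u $ \<iota> w)" by (simp add: sum_component)
      also have "\<dots> = (\<Sum>u\<in>U. if u = w then c u else 0)"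
        apply (rule sum.cong[OF refl])
        using \<iota> w by (auto simp: p0_def axis_def inj_on_def)
      also have "\<dots> = c w" using w fU by simp
      finally show ?thesis by simp
    qed
    show "c u = 0"
    proof (cases "u = u0")
      case True
      have "sum c U = c u0 + sum c ?W" using fU u0 by (simp add: sum.remove)
      also have "sum c ?W = 0" using cW by simp
      finally show ?thesis using c True by simp
    next
      case False then show ?thesis using cW u by simp
    qed
  qed
  have pf: "\<And>y u. y \<in> UNIV \<Longrightarrow> u \<in> U \<Longrightarrow> polyfun V (\<lambda>q::'v \<Rightarrow> real^'d. cK q y u)"
  proof -
    fix y :: "'d option" and u assume "y \<in> UNIV" "u \<in> U"
    then have uV: "u \<in> V" using UV by blast
    show "polyfun V (\<lambda>q. cK q y u)"
    proof (cases y)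
      case None
      then show ?thesis using polyfun_const[of V 1] by (simp add: cK_def)
    next
      case (Some k)
      then show ?thesis using polyfun_coord[OF uV, of k] by (simp add: cK_def)
    qed
  qed
  have fY: "finite (UNIV :: 'd option set)" by simp
  show ?thesis
    using ktriv_transfer[OF fU fY pf k0[unfolded KT_def] gen] unfolding KT_def .
qed

lemma invertible_affine_comp:
  assumes "invertible_affine f" "invertible_affine g"
  shows "invertible_affine (\<lambda>x. f (g x))"
proof -
  obtain A b where f: "invertible A" "f = (\<lambda>x. A *v x + b)" using assms(1) unfolding invertible_affine_def by blast
  obtain B c where g: "invertible B" "g = (\<lambda>x. B *v x + c)" using assms(2) unfolding invertible_affine_def by blast
  show ?thesis
    unfolding invertible_affine_def
    by (rule exI[of _ "A ** B"], rule exI[of _ "A *v c + b"])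
      (simp add: f g invertible_mult matrix_vector_right_distrib matrix_vector_mul_assoc add.assoc)
qed

lemma invertible_affine_inv:
  assumes "invertible_affine f"
  shows "\<exists>g. invertible_affine g \<and> (\<forall>x. g (f x) = x)"
proof -
  obtain A b where f: "invertible A" "f = (\<lambda>x. A *v x + b)" using assms(1) unfolding invertible_affine_def by blast
  obtain A' where A': "A ** A' = Finite_Cartesian_Product.mat 1" "A' ** A = Finite_Cartesian_Product.mat 1"
    using f(1) unfolding invertible_def by blast
  have "invertible A'" unfolding invertible_def using A' by blast
  then have "invertible_affine (\<lambda>x. A' *v x + (- (A' *v b)))"
    unfolding invertible_affine_def by blast
  moreover have "\<forall>x. A' *v (f x) + (- (A' *v b)) = x"
    by (simp add: f matrix_vector_right_distrib matrix_vector_mul_assoc A')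
  ultimately show ?thesis by blast
qed

lemma rigid_affine_transfer:
  assumes phi: "invertible_affine \<phi>" and pp: "\<forall>u\<in>V. \<phi> (p u) = p' u"
    and EV: "\<forall>h\<in>E. h \<subseteq> V" and rig: "affinely_rigid V E p"
  shows "affinely_rigid V E p'"
  unfolding affinely_rigid_def
proof (intro allI impI)
  fix q assume eq: "affinely_equivalent E p' q"
  have "affinely_equivalent E p q"
    unfolding affinely_equivalent_def
  proof
    fix h assume h: "h \<in> E"
    obtain g where g: "invertible_affine g" "\<forall>u\<in>h. g (p' u) = q u"
      using eq h unfolding affinely_equivalent_def by blast
    show "\<exists>g. invertible_affine g \<and> (\<forall>u\<in>h. g (p u) = q u)"
      using invertible_affine_comp[OF g(1) phi] g(2) pp EV h by (intro exI[of _ "\<lambda>x. g (\<phi> x)"]) (metis subsetD)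
  qed
  then obtain G where G: "invertible_affine G" "\<forall>u\<in>V. G (p u) = q u"
    using rig unfolding affinely_rigid_def affinely_congruent_def by blast
  obtain \<psi> where psi: "invertible_affine \<psi>" "\<forall>x. \<psi> (\<phi> x) = x"
    using invertible_affine_inv[OF phi] by blast
  show "affinely_congruent V p' q"
    unfolding affinely_congruent_def
    using invertible_affine_comp[OF G(1) psi(1)] G(2) psi(2) pp
    by (intro exI[of _ "\<lambda>x. G (\<psi> x)"]) (metis)
qed


lemma PERT:
  fixes p r :: "'v \<Rightarrow> real^'d"
  assumes fE: "finite E"
    and loc: "\<forall>h\<in>E. \<exists>A b. \<forall>u\<in>h. r u = A *v p u + b"
    and glob: "\<not>(\<exists>G c. \<forall>u\<in>V. r u = G *v p u + c)"
  shows "\<not> affinely_rigid V E p"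
proof
  assume rig: "affinely_rigid V E p"
  obtain Af bf where Af: "\<forall>h\<in>E. \<forall>u\<in>h. r u = Af h *v p u + bf h"
    using loc by metis
  have "\<forall>h\<in>E. \<exists>K>0. \<forall>x. norm (Af h *v x) \<le> norm x * K"
    using bounded_linear.pos_bounded[OF matrix_vector_mul_bounded_linear] by blast
  then obtain K where K: "\<forall>h\<in>E. K h > 0 \<and> (\<forall>x. norm (Af h *v x) \<le> norm x * K h)" by metis
  define M where "M = (\<Sum>h\<in>E. K h)"
  have M0: "M \<ge> 0" using K by (simp add: M_def sum_nonneg less_imp_le)
  have KM: "\<forall>h\<in>E. K h \<le> M"
  proof
    fix h assume h: "h \<in> E"
    show "K h \<le> M" unfolding M_def
      by (rule member_le_sum[OF h _ fE]) (use K in \<open>auto intro: less_imp_le\<close>)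
  qed
  define \<epsilon> where "\<epsilon> = 1 / (M + 1)"
  have e0: "\<epsilon> > 0" using M0 by (simp add: \<epsilon>_def)
  have eK: "\<epsilon> * K h < 1" if "h \<in> E" for h
  proof -
    have "\<epsilon> * K h \<le> \<epsilon> * M" using KM that e0 by (simp add: mult_left_mono)
    also have "\<dots> < \<epsilon> * (M + 1)" using e0 by simp
    also have "\<dots> = 1" using M0 by (simp add: \<epsilon>_def)
    finally show ?thesis .
  qed
  define q where "q u = p u + \<epsilon> *\<^sub>R r u" for u
  have inv: "invertible (Finite_Cartesian_Product.mat 1 + \<epsilon> *\<^sub>R Af h)" if h: "h \<in> E" for h
  proof (rule inj_imp_invertible, unfold vec.inj_iff_eq_0, intro allI impI)
    fix x assume "(Finite_Cartesian_Product.mat 1 + \<epsilon> *\<^sub>R Af h) *v x = 0"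
    then have x: "x = - (\<epsilon> *\<^sub>R (Af h *v x))"
      by (simp add: matrix_vector_mult_add_rdistrib scaleR_matrix_vector_assoc[symmetric] eq_neg_iff_add_eq_0)
    show "x = 0"
    proof (rule ccontr)
      assume "x \<noteq> 0"
      then have nx: "norm x > 0" by simp
      have "norm x = \<epsilon> * norm (Af h *v x)"
        using e0 by (subst x) simp
      also have "\<dots> \<le> \<epsilon> * (norm x * K h)"
        using K h e0 by (simp add: mult_left_mono)
      also have "\<dots> = (\<epsilon> * K h) * norm x" by simp
      also have "\<dots> < 1 * norm x" using eK[OF h] nx by (intro mult_strict_right_mono) auto
      finally show False by simp
    qed
  qed
  have "affinely_equivalent E p q"
    unfolding affinely_equivalent_def
  proof
    fix h assume h: "h \<in> E"
    show "\<exists>g. invertible_affine g \<and> (\<forall>u\<in>h. g (p u) = q u)"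
    proof (intro exI conjI)
      show "invertible_affine (\<lambda>x. (Finite_Cartesian_Product.mat 1 + \<epsilon> *\<^sub>R Af h) *v x + \<epsilon> *\<^sub>R bf h)"
        unfolding invertible_affine_def using inv[OF h] by blast
      show "\<forall>u\<in>h. (Finite_Cartesian_Product.mat 1 + \<epsilon> *\<^sub>R Af h) *v p u + \<epsilon> *\<^sub>R bf h = q u"
        using Af h by (simp add: q_def matrix_vector_mult_add_rdistrib scaleR_matrix_vector_assoc[symmetric]
            scaleR_add_right add.assoc)
    qed
  qed
  then obtain G c where G: "\<forall>u\<in>V. G *v p u + c = q u"
    using rig unfolding affinely_rigid_def affinely_congruent_def invertible_affine_def by blast
  have "\<forall>u\<in>V. r u = ((1 / \<epsilon>) *\<^sub>R (G - Finite_Cartesian_Product.mat 1)) *v p u + (1 / \<epsilon>) *\<^sub>R c"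
  proof
    fix u assume u: "u \<in> V"
    have "\<epsilon> *\<^sub>R r u = (G - Finite_Cartesian_Product.mat 1) *v p u + c"
      using G u by (simp add: q_def matrix_vector_mult_diff_rdistrib algebra_simps)
    then have "(1 / \<epsilon>) *\<^sub>R (\<epsilon> *\<^sub>R r u) = (1 / \<epsilon>) *\<^sub>R ((G - Finite_Cartesian_Product.mat 1) *v p u + c)"
      by simp
    then show "r u = ((1 / \<epsilon>) *\<^sub>R (G - Finite_Cartesian_Product.mat 1)) *v p u + (1 / \<epsilon>) *\<^sub>R c"
      using e0 by (simp add: scaleR_matrix_vector_assoc[symmetric] scaleR_add_right)
  qed
  then show False using glob by blast
qed


datatype ('v, 'd) var = VR 'v 'd | VA "'v set" 'd 'd | VB "'v set" 'd
datatype ('v, 'd) eqn = EQ1 "'v set" 'v 'd | EQ2 'v 'd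

definition Xs :: "'v set \<Rightarrow> 'v set set \<Rightarrow> ('v, 'd) var set" where
  "Xs V E1 = {x. case x of VR u k \<Rightarrow> u \<in> V | VA h k j \<Rightarrow> h \<in> E1 | VB h k \<Rightarrow> h \<in> E1}"

definition Ys :: "'v set set \<Rightarrow> 'v set \<Rightarrow> ('v, 'd) eqn set" where
  "Ys E1 B = {y. case y of EQ1 h u k \<Rightarrow> h \<in> E1 \<and> u \<in> h | EQ2 u k \<Rightarrow> u \<in> B}"

definition cB :: "('v \<Rightarrow> real^'d) \<Rightarrow> ('v, 'd) eqn \<Rightarrow> ('v, 'd) var \<Rightarrow> real" where
  "cB p y x = (case y of
      EQ1 h u k \<Rightarrow> (case x of
          VR u' k' \<Rightarrow> if u' = u \<and> k' = k then 1 else 0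
        | VA h' k' j \<Rightarrow> if h' = h \<and> k' = k then - (p u $ j) else 0
        | VB h' k' \<Rightarrow> if h' = h \<and> k' = k then -1 else 0)
    | EQ2 u k \<Rightarrow> (case x of VR u' k' \<Rightarrow> if u' = u \<and> k' = k then 1 else 0 | _ \<Rightarrow> 0))"

lemma finite_Xs:
  assumes "finite V" "finite E1"
  shows "finite (Xs V E1 :: ('v, 'd::finite) var set)"
proof (rule finite_subset)
  show "Xs V E1 \<subseteq> (\<lambda>(u, k). VR u k) ` (V \<times> UNIV) \<union> (\<lambda>(h, k, j). VA h k j) ` (E1 \<times> UNIV \<times> UNIV)
      \<union> (\<lambda>(h, k). VB h k) ` (E1 \<times> UNIV)"
    by (rule subsetI, case_tac x) (auto simp: Xs_def image_iff)
  show "finite ((\<lambda>(u, k). VR u k) ` (V \<times> (UNIV::'d set)) \<union> (\<lambda>(h, k, j). VA h k j) ` (E1 \<times> (UNIV::'d set) \<times> (UNIV::'d set))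
      \<union> (\<lambda>(h, k). VB h k) ` (E1 \<times> (UNIV::'d set)))"
    using assms by simp
qed

lemma finite_Ys:
  assumes "finite V" "finite E1" "\<forall>h\<in>E1. h \<subseteq> V" "B \<subseteq> V"
  shows "finite (Ys E1 B :: ('v, 'd::finite) eqn set)"
proof (rule finite_subset)
  show "Ys E1 B \<subseteq> (\<lambda>(h, u, k). EQ1 h u k) ` (E1 \<times> V \<times> UNIV) \<union> (\<lambda>(u, k). EQ2 u k) ` (V \<times> UNIV)"
    using assms(3,4) by (intro subsetI, case_tac x) (auto simp: Ys_def image_iff)
  show "finite ((\<lambda>(h, u, k). EQ1 h u k) ` (E1 \<times> V \<times> (UNIV::'d set)) \<union> (\<lambda>(u, k). EQ2 u k) ` (V \<times> (UNIV::'d set)))"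
    using assms by simp
qed

lemma polyfun_if: "polyfun V f \<Longrightarrow> polyfun V g \<Longrightarrow> polyfun V (\<lambda>p. if c then f p else g p)"
  by (cases c) auto

lemma polyfun_0: "polyfun V (\<lambda>p. 0)" using polyfun_const[of V 0] by simp
lemma polyfun_1: "polyfun V (\<lambda>p. 1)" using polyfun_const[of V 1] by simp
lemma polyfun_m1: "polyfun V (\<lambda>p. -1)" using polyfun_const[of V "-1"] by simp

lemma polyfun_cB:
  assumes "y \<in> Ys E1 B" "\<forall>h\<in>E1. h \<subseteq> V" "B \<subseteq> V"
  shows "polyfun V (\<lambda>p. cB p y x)"
proof (cases y)
  case (EQ1 h u k)
  then have uV: "u \<in> V" using assms by (auto simp: Ys_def)
  show ?thesis using EQ1
    by (cases x) (auto simp: cB_def intro!: polyfun_if polyfun_0 polyfun_1 polyfun_m1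
        polyfun_neg polyfun_coord[OF uV])
next
  case (EQ2 u k)
  then show ?thesis
    by (cases x) (auto simp: cB_def intro!: polyfun_if polyfun_0 polyfun_1)
qed

lemma sum_EQ2:
  fixes p :: "'v \<Rightarrow> real^'d"
  assumes "finite V" "finite E1" "u \<in> V"
  shows "(\<Sum>x\<in>Xs V E1. cB p (EQ2 u k) x * z x) = z (VR u k)"
proof -
  have "\<And>x. cB p (EQ2 u k) x * z x = (if x = VR u k then z (VR u k) else 0)"
    subgoal for x by (cases x) (auto simp: cB_def)
    done
  moreover have "VR u k \<in> Xs V E1" using assms(3) by (simp add: Xs_def)
  moreover have "finite (Xs V E1 :: ('v, 'd) var set)" using finite_Xs assms by blast
  ultimately show ?thesis by simp
qed

lemma sum_EQ1:
  fixes p :: "'v \<Rightarrow> real^'d"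
  assumes "finite V" "finite E1" "h \<in> E1" "u \<in> V"
  shows "(\<Sum>x\<in>Xs V E1. cB p (EQ1 h u k) x * z x)
      = z (VR u k) - (\<Sum>j\<in>UNIV. p u $ j * z (VA h k j)) - z (VB h k)"
proof -
  have fX: "finite (Xs V E1 :: ('v, 'd) var set)" using finite_Xs assms by blast
  have pt: "\<And>x. cB p (EQ1 h u k) x * z x = (if x = VR u k then z (VR u k) else 0)
      - (if x = VB h k then z (VB h k) else 0)
      - (\<Sum>j\<in>UNIV. if x = VA h k j then p u $ j * z (VA h k j) else 0)"
  proof -
    fix x :: "('v, 'd) var"
    show "cB p (EQ1 h u k) x * z x = (if x = VR u k then z (VR u k) else 0)
      - (if x = VB h k then z (VB h k) else 0)
      - (\<Sum>j\<in>UNIV. if x = VA h k j then p u $ j * z (VA h k j) else 0)"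
    proof (cases x)
      case (VR u' k') then show ?thesis by (simp add: cB_def)
    next
      case (VA h' k' j')
      show ?thesis
      proof (cases "h' = h \<and> k' = k")
        case True then show ?thesis using VA by (simp add: cB_def sum.delta')
      next
        case False
        have z: "\<And>j. (if h' = h \<and> k' = k \<and> j' = j then p u $ j * z (VA h k j) else 0) = 0"
          using False by (intro if_not_P) blast
        have "(\<Sum>j\<in>UNIV. if h' = h \<and> k' = k \<and> j' = j then p u $ j * z (VA h k j) else 0) = 0"
          by (rule sum.neutral) (simp add: z)
        then show ?thesis using VA False by (simp add: cB_def) blast
      qed
    next
      case (VB h' k') then show ?thesis by (simp add: cB_def)
    qed
  qed
  have "(\<Sum>x\<in>Xs V E1. cB p (EQ1 h u k) x * z x)
     = (\<Sum>x\<in>Xs V E1. if x = VR u k then z (VR u k) else 0)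
      - (\<Sum>x\<in>Xs V E1. if x = VB h k then z (VB h k) else 0)
      - (\<Sum>x\<in>Xs V E1. \<Sum>j\<in>UNIV. if x = VA h k j then p u $ j * z (VA h k j) else 0)"
    unfolding pt by (simp add: sum_subtractf)
  also have "(\<Sum>x\<in>Xs V E1. \<Sum>j\<in>UNIV. if x = VA h k j then p u $ j * z (VA h k j) else 0)
      = (\<Sum>j\<in>UNIV. \<Sum>x\<in>Xs V E1. if x = VA h k j then p u $ j * z (VA h k j) else 0)"
    by (rule sum.swap)
  also have "\<dots> = (\<Sum>j\<in>UNIV. p u $ j * z (VA h k j))"
    using fX assms by (simp add: Xs_def)
  moreover have "VR u k \<in> Xs V E1" "VB h k \<in> Xs V E1" using assms by (simp_all add: Xs_def)
  ultimately show ?thesis using fX by simp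
qed

lemma sys_iff:
  fixes p :: "'v \<Rightarrow> real^'d"
  assumes "finite V" "finite E1" "\<forall>h\<in>E1. h \<subseteq> V" "B \<subseteq> V"
  shows "(\<forall>y\<in>Ys E1 B. (\<Sum>x\<in>Xs V E1. cB p y x * z x) = 0) \<longleftrightarrow>
    (\<forall>h\<in>E1. \<forall>u\<in>h. \<forall>k. z (VR u k) = (\<Sum>j\<in>UNIV. p u $ j * z (VA h k j)) + z (VB h k)) \<and>
    (\<forall>u\<in>B. \<forall>k. z (VR u k) = 0)"
proof -
  have a: "(\<Sum>x\<in>Xs V E1. cB p (EQ1 h u k) x * z x) = 0 \<longleftrightarrow>
      z (VR u k) = (\<Sum>j\<in>UNIV. p u $ j * z (VA h k j)) + z (VB h k)" if "h \<in> E1" "u \<in> h" for h u k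
  proof -
    have uV: "u \<in> V" using assms(3) that by blast
    show ?thesis using sum_EQ1[OF assms(1,2) that(1) uV, of p k z] by auto
  qed
  have b: "(\<Sum>x\<in>Xs V E1. cB p (EQ2 u k) x * z x) = 0 \<longleftrightarrow> z (VR u k) = 0" if "u \<in> B" for u k
  proof -
    have uV: "u \<in> V" using assms(4) that by blast
    show ?thesis using sum_EQ2[OF assms(1,2) uV, of p k z] by auto
  qed
  show ?thesis
  proof
    assume H: "\<forall>y\<in>Ys E1 B. (\<Sum>x\<in>Xs V E1. cB p y x * z x) = 0"
    show "(\<forall>h\<in>E1. \<forall>u\<in>h. \<forall>k. z (VR u k) = (\<Sum>j\<in>UNIV. p u $ j * z (VA h k j)) + z (VB h k)) \<and>
      (\<forall>u\<in>B. \<forall>k. z (VR u k) = 0)"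
      using H a b by (auto simp: Ys_def)
  next
    assume H: "(\<forall>h\<in>E1. \<forall>u\<in>h. \<forall>k. z (VR u k) = (\<Sum>j\<in>UNIV. p u $ j * z (VA h k j)) + z (VB h k)) \<and>
      (\<forall>u\<in>B. \<forall>k. z (VR u k) = 0)"
    show "\<forall>y\<in>Ys E1 B. (\<Sum>x\<in>Xs V E1. cB p y x * z x) = 0"
    proof
      fix y :: "('v, 'd) eqn" assume y: "y \<in> Ys E1 B"
      show "(\<Sum>x\<in>Xs V E1. cB p y x * z x) = 0"
      proof (cases y)
        case (EQ1 h u k) then show ?thesis using y H a by (auto simp: Ys_def)
      next
        case (EQ2 u k) then show ?thesis using y H b by (auto simp: Ys_def)
      qed
    qed
  qed
qed


lemma B1:
  fixes p :: "'v \<Rightarrow> real^'d"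
  assumes fV: "finite V" and EV: "\<forall>h\<in>E. h \<subseteq> V" and BV: "B \<subseteq> V"
    and cardB: "card B = CARD('d) + 1" and cardV: "CARD('d) + 2 \<le> card V"
    and G: "\<And>U. U \<subseteq> V \<Longrightarrow> card U \<le> CARD('d) + 1 \<Longrightarrow> KT p U"
    and E1: "E1 = {h\<in>E. CARD('d) + 1 \<le> card h}"
    and kt: "ktriv (Xs V E1) (Ys E1 B) (cB p :: ('v, 'd) eqn \<Rightarrow> ('v, 'd) var \<Rightarrow> real)"
  shows "affinely_rigid V E p"
proof -
  have fE1: "finite E1" using E1 EV fV by (intro finite_subset[of E1 "Pow V"]) auto
  have E1V: "\<forall>h\<in>E1. h \<subseteq> V" using E1 EV by auto
  have KZ: "\<And>z. (\<forall>h\<in>E1. \<forall>u\<in>h. \<forall>k. z (VR u k) = (\<Sum>j\<in>UNIV. p u $ j * z (VA h k j)) + z (VB h k)) \<and>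
      (\<forall>u\<in>B. \<forall>k. z (VR u k) = 0) \<Longrightarrow> \<forall>x\<in>Xs V E1. z x = 0"
  proof -
    fix z :: "('v, 'd) var \<Rightarrow> real"
    assume H: "(\<forall>h\<in>E1. \<forall>u\<in>h. \<forall>k. z (VR u k) = (\<Sum>j\<in>UNIV. p u $ j * z (VA h k j)) + z (VB h k)) \<and>
      (\<forall>u\<in>B. \<forall>k. z (VR u k) = 0)"
    have A: "\<forall>y\<in>Ys E1 B. (\<Sum>x\<in>Xs V E1. cB p y x * z x) = 0"
      using sys_iff[OF fV fE1 E1V BV, of p z] H by (rule iffD2)
    have "(\<forall>y\<in>Ys E1 B. (\<Sum>x\<in>Xs V E1. cB p y x * z x) = 0) \<longrightarrow> (\<forall>x\<in>Xs V E1. z x = 0)"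
      using kt unfolding ktriv_def by (rule spec)
    then show "\<forall>x\<in>Xs V E1. z x = 0" using A by (rule mp)
  qed
  have fB: "finite B" using BV fV finite_subset by blast
  show ?thesis unfolding affinely_rigid_def
  proof (intro allI impI)
    fix q assume eqv: "affinely_equivalent E p q"
    have "\<forall>h\<in>E. \<exists>A b. invertible A \<and> (\<forall>u\<in>h. A *v p u + b = q u)"
      using eqv unfolding affinely_equivalent_def invertible_affine_def by fastforce
    then obtain Gh ch where Gh: "\<forall>h\<in>E. invertible (Gh h) \<and> (\<forall>u\<in>h. Gh h *v p u + ch h = q u)"
      by metis
    obtain At bt where At: "\<forall>u\<in>B. At *v p u + bt = q u"
      using KT_EXT[OF G[OF BV] fB, of q] cardB by auto
    show "affinely_congruent V p q"
    proof (cases "E1 = {}")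
      case True
      have "\<not> V \<subseteq> B" using card_mono[OF fB, of V] cardB cardV by auto
      then obtain w where w: "w \<in> V" "w \<notin> B" by blast
      define z :: "('v, 'd) var \<Rightarrow> real" where "z x = (if x = VR w undefined then 1 else 0)" for x
      have "\<forall>x\<in>Xs V E1. z x = 0"
        by (rule KZ) (use True w in \<open>auto simp: z_def\<close>)
      moreover have "VR w undefined \<in> Xs V E1" using w by (simp add: Xs_def)
      ultimately have "z (VR w undefined) = 0" by blast
      then show ?thesis by (simp add: z_def)
    next
      case False
      then obtain h0 where h0: "h0 \<in> E1" by blast
      define z :: "('v, 'd) var \<Rightarrow> real" where
        "z x = (case x of VR u k \<Rightarrow> (q u - (At *v p u + bt)) $ k
           | VA h k j \<Rightarrow> (Gh h - At) $ k $ j | VB h k \<Rightarrow> (ch h - bt) $ k)" for x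
      have eq1: "\<forall>h\<in>E1. \<forall>u\<in>h. \<forall>k. z (VR u k) = (\<Sum>j\<in>UNIV. p u $ j * z (VA h k j)) + z (VB h k)"
      proof (intro ballI allI)
        fix h u k assume h: "h \<in> E1" and u: "u \<in> h"
        have hE: "h \<in> E" using h E1 by simp
        have "q u - (At *v p u + bt) = (Gh h - At) *v p u + (ch h - bt)"
          using Gh hE u by (simp add: matrix_vector_mult_diff_rdistrib algebra_simps)
        then have "(q u - (At *v p u + bt)) $ k = ((Gh h - At) *v p u + (ch h - bt)) $ k" by metis
        then show "z (VR u k) = (\<Sum>j\<in>UNIV. p u $ j * z (VA h k j)) + z (VB h k)"
          by (simp add: z_def matrix_vector_mult_def mult.commute)
      qed
      have eq2: "\<forall>u\<in>B. \<forall>k. z (VR u k) = 0" using At by (simp add: z_def)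
      have Z: "\<forall>x\<in>Xs V E1. z x = 0" using KZ eq1 eq2 by blast
      have qV: "\<forall>u\<in>V. q u = At *v p u + bt"
      proof
        fix u assume u: "u \<in> V"
        have "\<forall>k. z (VR u k) = 0" using Z u by (simp add: Xs_def)
        then show "q u = At *v p u + bt" by (simp add: z_def Finite_Cartesian_Product.vec_eq_iff)
      qed
      have "Gh h0 = At"
      proof -
        have "\<forall>k j. z (VA h0 k j) = 0" using Z h0 by (simp add: Xs_def)
        then show ?thesis by (simp add: z_def Finite_Cartesian_Product.vec_eq_iff)
      qed
      then have "invertible At" using Gh h0 E1 by auto
      then show ?thesis unfolding affinely_congruent_def invertible_affine_def
        using qV by (intro exI[of _ "\<lambda>x. At *v x + bt"]) auto
    qed
  qed
qed

lemma B2: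
  fixes p :: "'v \<Rightarrow> real^'d"
  assumes fV: "finite V" and EV: "\<forall>h\<in>E. h \<subseteq> V" and BV: "B \<subseteq> V"
    and cardB: "card B = CARD('d) + 1"
    and G: "\<And>U. U \<subseteq> V \<Longrightarrow> card U \<le> CARD('d) + 1 \<Longrightarrow> KT p U"
    and E1: "E1 = {h\<in>E. CARD('d) + 1 \<le> card h}"
    and nkt: "\<not> ktriv (Xs V E1) (Ys E1 B) (cB p :: ('v, 'd) eqn \<Rightarrow> ('v, 'd) var \<Rightarrow> real)"
  shows "\<not> affinely_rigid V E p"
proof -
  have fE: "finite E" using EV fV by (intro finite_subset[of E "Pow V"]) auto
  have fE1: "finite E1" using E1 fE by simp
  have E1V: "\<forall>h\<in>E1. h \<subseteq> V" using E1 EV by auto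
  have fB: "finite B" using BV fV finite_subset by blast
  obtain z :: "('v, 'd) var \<Rightarrow> real" where
    zA: "\<forall>y\<in>Ys E1 B. (\<Sum>x\<in>Xs V E1. cB p y x * z x) = 0" and zB: "\<not> (\<forall>x\<in>Xs V E1. z x = 0)"
    using nkt unfolding ktriv_def by blast
  have sys: "(\<forall>h\<in>E1. \<forall>u\<in>h. \<forall>k. z (VR u k) = (\<Sum>j\<in>UNIV. p u $ j * z (VA h k j)) + z (VB h k)) \<and>
      (\<forall>u\<in>B. \<forall>k. z (VR u k) = 0)"
    using sys_iff[OF fV fE1 E1V BV, of p z] zA by (rule iffD1)
  obtain x0 where x0: "x0 \<in> Xs V E1" "z x0 \<noteq> 0" using zB by blast
  define r where "r u = (\<chi> k. z (VR u k))" for u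
  define Af where "Af h = (\<chi> k j. z (VA h k j))" for h
  define bf where "bf h = (\<chi> k. z (VB h k))" for h
  have loc1: "\<forall>h\<in>E1. \<forall>u\<in>h. r u = Af h *v p u + bf h"
    using sys by (simp add: r_def Af_def bf_def Finite_Cartesian_Product.vec_eq_iff matrix_vector_mult_def mult.commute)
  have rB: "\<forall>u\<in>B. r u = 0" using sys by (simp add: r_def Finite_Cartesian_Product.vec_eq_iff)
  have hz: "Af h = 0 \<and> bf h = 0" if h: "h \<in> E1" and r0: "\<forall>u\<in>V. r u = 0" for h
  proof -
    have hV: "h \<subseteq> V" using h E1V by blast
    have "CARD('d) + 1 \<le> card h" using h E1 by simp
    then obtain U where U: "U \<subseteq> h" "card U = CARD('d) + 1" "finite U"
      by (rule obtain_subset_with_card_n)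
    have "KT p U" using G[of U] U hV by auto
    moreover have "\<forall>u\<in>U. Af h *v p u + bf h = 0" using loc1 r0 h U hV by fastforce
    ultimately show ?thesis using KT_UNIQ U by blast
  qed
  have nz: "\<exists>u\<in>V. r u \<noteq> 0"
  proof (rule ccontr)
    assume "\<not> ?thesis"
    then have r0: "\<forall>u\<in>V. r u = 0" by blast
    show False
    proof (cases x0)
      case (VR u k)
      then have "u \<in> V" using x0 by (simp add: Xs_def)
      then have "r u $ k = 0" using r0 by simp
      then show False using x0 VR by (simp add: r_def)
    next
      case (VA h k j)
      have h: "h \<in> E1" using x0 VA by (simp add: Xs_def)
      have "Af h $ k $ j = 0" using hz[OF h r0] by simp
      then show False using x0 VA by (simp add: Af_def)
    next
      case (VB h k)
      have h: "h \<in> E1" using x0 VB by (simp add: Xs_def)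
      have "bf h $ k = 0" using hz[OF h r0] by simp
      then show False using x0 VB by (simp add: bf_def)
    qed
  qed
  have loc: "\<forall>h\<in>E. \<exists>A b. \<forall>u\<in>h. r u = A *v p u + b"
  proof
    fix h assume h: "h \<in> E"
    show "\<exists>A b. \<forall>u\<in>h. r u = A *v p u + b"
    proof (cases "h \<in> E1")
      case True then show ?thesis using loc1 by blast
    next
      case False
      then have "card h \<le> CARD('d)" using E1 h by auto
      then have "KT p h" using G EV h by auto
      moreover have "finite h" using EV h fV finite_subset by blast
      ultimately obtain A b where "\<forall>u\<in>h. A *v p u + b = r u" using KT_EXT by blast
      then show ?thesis by metis
    qed
  qed
  have glob: "\<not>(\<exists>G c. \<forall>u\<in>V. r u = G *v p u + c)"
  proof
    assume "\<exists>G c. \<forall>u\<in>V. r u = G *v p u + c"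
    then obtain Gm c where Gc: "\<forall>u\<in>V. r u = Gm *v p u + c" by blast
    have "\<forall>u\<in>B. Gm *v p u + c = 0" using Gc rB BV by (metis subsetD)
    then have "Gm = 0 \<and> c = 0" using KT_UNIQ[OF G[OF BV] fB cardB] cardB by auto
    then have "\<forall>u\<in>V. r u = 0" using Gc by simp
    then show False using nz by blast
  qed
  show ?thesis using PERT[OF fE loc glob] .
qed


theorem corollary3p9:
  fixes V :: "'v set" and E :: "'v set set"
  assumes "finite V" and "\<forall>h\<in>E. h \<subseteq> V"
  shows "(\<forall>p :: 'v \<Rightarrow> real ^ 'd. generic_config V p \<longrightarrow> affinely_rigid V E p) \<or>
         (\<forall>p :: 'v \<Rightarrow> real ^ 'd. generic_config V p \<longrightarrow> \<not> affinely_rigid V E p)"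
proof -
  have key: "affinely_rigid V E p2"
    if g1: "generic_config V p1" and g2: "generic_config V p2" and r1: "affinely_rigid V E p1"
    for p1 p2 :: "'v \<Rightarrow> real^'d"
  proof (cases "card V \<le> CARD('d) + 1")
    case True
    have "KT p1 V" "KT p2 V"
      using generic_KT[OF g1 subset_refl assms(1) True] generic_KT[OF g2 subset_refl assms(1) True] by auto
    then obtain \<phi> where "invertible_affine \<phi>" "\<forall>u\<in>V. \<phi> (p1 u) = p2 u"
      using KT_A2 assms(1) by blast
    then show ?thesis using rigid_affine_transfer assms(2) r1 by blast
  next
    case False
    then have cV: "CARD('d) + 2 \<le> card V" by simp
    obtain B where B: "B \<subseteq> V" "card B = CARD('d) + 1" "finite B"
      using obtain_subset_with_card_n[of "CARD('d) + 1" V] False by auto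
    define E1 where "E1 = {h\<in>E. CARD('d) + 1 \<le> card h}"
    have G1: "\<And>U. U \<subseteq> V \<Longrightarrow> card U \<le> CARD('d) + 1 \<Longrightarrow> KT p1 U"
      using generic_KT[OF g1 _ assms(1)] by blast
    have G2: "\<And>U. U \<subseteq> V \<Longrightarrow> card U \<le> CARD('d) + 1 \<Longrightarrow> KT p2 U"
      using generic_KT[OF g2 _ assms(1)] by blast
    have k1: "ktriv (Xs V E1) (Ys E1 B) (cB p1 :: ('v, 'd) eqn \<Rightarrow> ('v, 'd) var \<Rightarrow> real)"
      using B2[OF assms(1) assms(2) B(1) B(2) G1 E1_def] r1 by blast
    have fE1: "finite E1" using E1_def assms by (intro finite_subset[of E1 "Pow V"]) auto
    have E1V: "\<forall>h\<in>E1. h \<subseteq> V" using E1_def assms(2) by auto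
    have pf: "\<And>y x. y \<in> Ys E1 B \<Longrightarrow> x \<in> Xs V E1 \<Longrightarrow>
        polyfun V (\<lambda>p::'v \<Rightarrow> real^'d. cB p (y :: ('v, 'd) eqn) (x :: ('v, 'd) var))"
      using polyfun_cB[OF _ E1V B(1)] by blast
    have k2: "ktriv (Xs V E1) (Ys E1 B) (cB p2 :: ('v, 'd) eqn \<Rightarrow> ('v, 'd) var \<Rightarrow> real)"
      using ktriv_transfer[OF finite_Xs[OF assms(1) fE1] finite_Ys[OF assms(1) fE1 E1V B(1)] pf k1 g2] .
    show ?thesis using B1[OF assms(1,2) B(1,2) cV G2 E1_def k2] .
  qed
  show ?thesis using key by blast
qed


end
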